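(* For every term or command $T$ and type $\sigma$: (1) For names $\alpha,\beta$ with $\beta\notin\mathrm{dom}(\Delta)$: $\Gamma\vdash T[\alpha/\beta]:\sigma\mid\Delta$ is derivable if and only if there is $\kappa$ with $\Gamma\vdash T:\sigma\mid\beta{:}\kappa,\Delta$ derivable and $\Delta(\alpha)\le_C\kappa$. (2) For a term variable $x\notin\mathrm{dom}(\Gamma)$ and a term $L$: $\Gamma\vdash T[L/x]:\sigma\mid\Delta$ is derivable if and only if there exists $\delta'$ such that $\Gamma,x{:}\delta'\vdash T:\sigma\mid\Delta$ and $\Gamma\vdash L:\delta'\mid\Delta$ are derivable.
   Context: $\lambda\mu$ terms and commands: $M::=x\mid\lambda x.M\mid MN\mid\mu\alpha.\mathsf C$ and $\mathsf C::=[\alpha]M$. $T[L/x]$ is capture-avoiding substitution, and $T[\alpha/\beta]$ renames free occurrences of the name $\beta$ to $\alpha$. Types (for a fixed $\omega$-algebraic lattice $R$): - $\Lambda_R$: $\rho::=\psi_a\mid\omega\mid\rho\wedge\rho$ ($a$ compact in $R$); - $\Lambda_D$: $\delta::=\rho\mid\kappa\to\rho\mid\omega\mid\delta\wedge\delta$; - $\Lambda_C$: $\kappa::=\delta\times\kappa\mid\omega\mid\kappa\wedge\kappa$. The relations $\le_R,\le_D,\le_C$ are the least reflexive, transitive relations with $\sigma\wedge\tau\le\sigma,\tau$, $\sigma\le\omega$, $\rho\le\sigma,\tau\Rightarrow\rho\le\sigma\wedge\tau$, and additionally: - $\psi_\bot\sim\omega$ and $\psi_{a\sqcup b}\sim\psi_a\wedge\psi_b$;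 - $\le_R\subseteq\le_D$; - $\omega\le_D\omega\to\omega$; - $\psi_a\le_D\omega\to\psi_a\le_D\psi_a$; - $\omega\le_C\omega\times\omega$; - $(\kappa\to\rho_1)\wedge(\kappa\to\rho_2)\le_D\kappa\to(\rho_1\wedge\rho_2)$; - $(\delta_1\times\kappa_1)\wedge(\delta_2\times\kappa_2)\le_C(\delta_1\wedge\delta_2)\times(\kappa_1\wedge\kappa_2)$; - $\to$ is contravariant in $\Lambda_C$ and covariant in $\Lambda_R$; - $\times$ is covariant in both arguments. Type assignment. Bases $\Gamma$ are finite maps from variables to $\Lambda_D$, and contexts $\Delta$ are finite maps from names to $\Lambda_C$. $\Gamma(x)$ and $\Delta(\alpha)$ are $\omega$ outside the domain. $\Gamma,x{:}\delta$ denotes $\Gamma\cup\{x{:}\delta\}$ (with $x\notin\mathrm{dom}\Gamma$ or $x{:}\delta\in\Gamma$), and similarly $\beta{:}\kappa,\Delta$. The rules are: - (Ax) $\Gamma,x{:}\delta\vdash x:\delta\mid\Delta$. - (Abs) From $\Gamma\vdash M:\kappa\to\rho\mid\Delta$, $\Gamma(x)=\delta$, infer $\Gamma\setminus x\vdash\lambda x.M:(\delta\times\kappa)\to\rho\mid\Delta$. - (App) From $\Gamma\vdash M:(\delta\times\kappa)\to\rho\mid\Delta$ and $\Gamma\vdash N:\delta\mid\Delta$, infer $\Gamma\vdash MN:\kappa\to\rho\mid\Delta$. - (Cmd) From $\Gamma\vdash M:\delta\mid\Delta$, $\Delta(\alpha)=\kappa$, infer $\Gamma\vdash[\alpha]M:\delta\times\kappa\mid\Delta$.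 - ($\mu$) From $\Gamma\vdash\mathsf C:(\kappa'\to\rho)\times\kappa'\mid\Delta$, $\Delta(\alpha)=\kappa$, infer $\Gamma\vdash\mu\alpha.\mathsf C:\kappa\to\rho\mid\Delta\setminus\alpha$. - ($\wedge$), ($\omega$) and ($\le$). Variables in $\Gamma$ and names in $\Delta$ are assumed not bound in the subject. *)

theory Defs
  imports Main "HOL-Library.Countable_Set"
begin

definition directed_set :: "'a::order set \<Rightarrow> bool" where
  "directed_set D \<longleftrightarrow> D \<noteq> {} \<and> (\<forall>x\<in>D. \<forall>y\<in>D. \<exists>z\<in>D. x \<le> z \<and> y \<le> z)"

definition compact_elem :: "'a::complete_lattice \<Rightarrow> bool" where
  "compact_elem a \<longleftrightarrow> (\<forall>D. directed_set D \<and> a \<le> Sup D \<longrightarrow> (\<exists>d\<in>D. a \<le> d))"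

definition omega_algebraic :: "'a::complete_lattice itself \<Rightarrow> bool" where
  "omega_algebraic _ \<longleftrightarrow>
     countable {a::'a. compact_elem a} \<and> (\<forall>x::'a. x = Sup {a. compact_elem a \<and> a \<le> x})"

text \<open>The compact elements of R (indices of the atomic types psi_a).\<close>
typedef (overloaded) ('a::complete_lattice) cpt = "{a::'a. compact_elem a}"
  by (rule exI[of _ bot]) (auto simp: compact_elem_def directed_set_def)

datatype 'c rty = Psi 'c | OmR | AndR "'c rty" "'c rty"

datatype 'c dty =
    DPsi 'c | Arr "'c cty" "'c rty" | OmD | AndD "'c dty" "'c dty"
and 'c cty = Prod "'c dty" "'c cty" | OmC | AndC "'c cty" "'c cty"

primrec emb :: "'c rty \<Rightarrow> 'c dty" where
  "emb (Psi a) = DPsi a"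
| "emb OmR = OmD"
| "emb (AndR a b) = AndD (emb a) (emb b)"

inductive le_R :: "'r::complete_lattice cpt rty \<Rightarrow> 'r cpt rty \<Rightarrow> bool" where
  R_refl: "le_R a a"
| R_trans: "le_R a b \<Longrightarrow> le_R b c \<Longrightarrow> le_R a c"
| R_andL: "le_R (AndR a b) a"
| R_andR: "le_R (AndR a b) b"
| R_om: "le_R a OmR"
| R_glb: "le_R a b \<Longrightarrow> le_R a c \<Longrightarrow> le_R a (AndR b c)"
| R_bot1: "Rep_cpt c = bot \<Longrightarrow> le_R (Psi c) OmR"
| R_bot2: "Rep_cpt c = bot \<Longrightarrow> le_R OmR (Psi c)"
| R_join1: "Rep_cpt c = sup (Rep_cpt a) (Rep_cpt b) \<Longrightarrow> le_R (Psi c) (AndR (Psi a) (Psi b))"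
| R_join2: "Rep_cpt c = sup (Rep_cpt a) (Rep_cpt b) \<Longrightarrow> le_R (AndR (Psi a) (Psi b)) (Psi c)"

inductive le_D :: "'r::complete_lattice cpt dty \<Rightarrow> 'r cpt dty \<Rightarrow> bool"
  and le_C :: "'r::complete_lattice cpt cty \<Rightarrow> 'r cpt cty \<Rightarrow> bool" where
  D_refl: "le_D a a"
| D_trans: "le_D a b \<Longrightarrow> le_D b c \<Longrightarrow> le_D a c"
| D_andL: "le_D (AndD a b) a"
| D_andR: "le_D (AndD a b) b"
| D_om: "le_D a OmD"
| D_glb: "le_D a b \<Longrightarrow> le_D a c \<Longrightarrow> le_D a (AndD b c)"
| D_R: "le_R r r' \<Longrightarrow> le_D (emb r) (emb r')"
| D_om_arr: "le_D OmD (Arr OmC OmR)"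
| D_psi1: "le_D (DPsi a) (Arr OmC (Psi a))"
| D_psi2: "le_D (Arr OmC (Psi a)) (DPsi a)"
| D_arr_and: "le_D (AndD (Arr k r1) (Arr k r2)) (Arr k (AndR r1 r2))"
| D_arr_mono: "le_C k' k \<Longrightarrow> le_R r r' \<Longrightarrow> le_D (Arr k r) (Arr k' r')"
| C_refl: "le_C a a"
| C_trans: "le_C a b \<Longrightarrow> le_C b c \<Longrightarrow> le_C a c"
| C_andL: "le_C (AndC a b) a"
| C_andR: "le_C (AndC a b) b"
| C_om: "le_C a OmC"
| C_glb: "le_C a b \<Longrightarrow> le_C a c \<Longrightarrow> le_C a (AndC b c)"
| C_om_prod: "le_C OmC (Prod OmD OmC)"
| C_prod_and: "le_C (AndC (Prod d1 k1) (Prod d2 k2)) (Prod (AndD d1 d2) (AndC k1 k2))"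
| C_prod_mono: "le_D d d' \<Longrightarrow> le_C k k' \<Longrightarrow> le_C (Prod d k) (Prod d' k')"

type_synonym var = nat
type_synonym name = nat

datatype trm = Var var | Lam var trm | App trm trm | Mu name cmd
and cmd = Cmd name trm

primrec fv_t :: "trm \<Rightarrow> var set" and fv_c :: "cmd \<Rightarrow> var set" where
  "fv_t (Var x) = {x}"
| "fv_t (Lam x M) = fv_t M - {x}"
| "fv_t (App M N) = fv_t M \<union> fv_t N"
| "fv_t (Mu a C) = fv_c C"
| "fv_c (Cmd a M) = fv_t M"

primrec bv_t :: "trm \<Rightarrow> var set" and bv_c :: "cmd \<Rightarrow> var set" where
  "bv_t (Var x) = {}"
| "bv_t (Lam x M) = insert x (bv_t M)"
| "bv_t (App M N) = bv_t M \<union> bv_t N"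
| "bv_t (Mu a C) = bv_c C"
| "bv_c (Cmd a M) = bv_t M"

primrec fn_t :: "trm \<Rightarrow> name set" and fn_c :: "cmd \<Rightarrow> name set" where
  "fn_t (Var x) = {}"
| "fn_t (Lam x M) = fn_t M"
| "fn_t (App M N) = fn_t M \<union> fn_t N"
| "fn_t (Mu a C) = fn_c C - {a}"
| "fn_c (Cmd a M) = insert a (fn_t M)"

primrec bn_t :: "trm \<Rightarrow> name set" and bn_c :: "cmd \<Rightarrow> name set" where
  "bn_t (Var x) = {}"
| "bn_t (Lam x M) = bn_t M"
| "bn_t (App M N) = bn_t M \<union> bn_t N"
| "bn_t (Mu a C) = insert a (bn_c C)"
| "bn_c (Cmd a M) = bn_t M"

text \<open>Substitution T[L/x]. It is capture-avoiding under the freshness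
  hypotheses (bound variables/names of T disjoint from the free ones of L)
  that the theorem assumes.\<close>
primrec subst_t :: "trm \<Rightarrow> trm \<Rightarrow> var \<Rightarrow> trm" and subst_c :: "cmd \<Rightarrow> trm \<Rightarrow> var \<Rightarrow> cmd" where
  "subst_t (Var y) L x = (if y = x then L else Var y)"
| "subst_t (Lam y M) L x = (if y = x then Lam y M else Lam y (subst_t M L x))"
| "subst_t (App M N) L x = App (subst_t M L x) (subst_t N L x)"
| "subst_t (Mu a C) L x = Mu a (subst_c C L x)"
| "subst_c (Cmd a M) L x = Cmd a (subst_t M L x)"

primrec ren_t :: "trm \<Rightarrow> name \<Rightarrow> name \<Rightarrow> trm" and ren_c :: "cmd \<Rightarrow> name \<Rightarrow> name \<Rightarrow> cmd" where
  "ren_t (Var y) a b = Var y"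
| "ren_t (Lam y M) a b = Lam y (ren_t M a b)"
| "ren_t (App M N) a b = App (ren_t M a b) (ren_t N a b)"
| "ren_t (Mu g C) a b = (if g = b then Mu g C else Mu g (ren_c C a b))"
| "ren_c (Cmd g M) a b = Cmd (if g = b then a else g) (ren_t M a b)"

type_synonym 'r basis = "var \<rightharpoonup> 'r cpt dty"
type_synonym 'r ctxt = "name \<rightharpoonup> 'r cpt cty"

definition gam :: "('r::complete_lattice) basis \<Rightarrow> var \<Rightarrow> 'r cpt dty" where
  "gam \<Gamma> x = (case \<Gamma> x of None \<Rightarrow> OmD | Some d \<Rightarrow> d)"

definition dlt :: "('r::complete_lattice) ctxt \<Rightarrow> name \<Rightarrow> 'r cpt cty" where
  "dlt \<Delta> a = (case \<Delta> a of None \<Rightarrow> OmC | Some k \<Rightarrow> k)"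

inductive typ_t :: "('r::complete_lattice) basis \<Rightarrow> trm \<Rightarrow> 'r cpt dty \<Rightarrow> 'r ctxt \<Rightarrow> bool"
  and typ_c :: "('r::complete_lattice) basis \<Rightarrow> cmd \<Rightarrow> 'r cpt cty \<Rightarrow> 'r ctxt \<Rightarrow> bool" where
  Ax: "\<Gamma> x = Some d \<Longrightarrow> typ_t \<Gamma> (Var x) d \<Delta>"
| Abs: "typ_t \<Gamma> M (Arr k r) \<Delta> \<Longrightarrow> typ_t (\<Gamma>(x := None)) (Lam x M) (Arr (Prod (gam \<Gamma> x) k) r) \<Delta>"
| App: "typ_t \<Gamma> M (Arr (Prod d k) r) \<Delta> \<Longrightarrow> typ_t \<Gamma> N d \<Delta> \<Longrightarrow> typ_t \<Gamma> (App M N) (Arr k r) \<Delta>"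
| Cmd: "typ_t \<Gamma> M d \<Delta> \<Longrightarrow> typ_c \<Gamma> (Cmd a M) (Prod d (dlt \<Delta> a)) \<Delta>"
| Mu: "typ_c \<Gamma> C (Prod (Arr k' r) k') \<Delta> \<Longrightarrow> typ_t \<Gamma> (Mu a C) (Arr (dlt \<Delta> a) r) (\<Delta>(a := None))"
| And_t: "typ_t \<Gamma> M d1 \<Delta> \<Longrightarrow> typ_t \<Gamma> M d2 \<Delta> \<Longrightarrow> typ_t \<Gamma> M (AndD d1 d2) \<Delta>"
| Om_t: "typ_t \<Gamma> M OmD \<Delta>"
| Le_t: "typ_t \<Gamma> M d \<Delta> \<Longrightarrow> le_D d d' \<Longrightarrow> typ_t \<Gamma> M d' \<Delta>"
| And_c: "typ_c \<Gamma> C k1 \<Delta> \<Longrightarrow> typ_c \<Gamma> C k2 \<Delta> \<Longrightarrow> typ_c \<Gamma> C (AndC k1 k2) \<Delta>"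
| Om_c: "typ_c \<Gamma> C OmC \<Delta>"
| Le_c: "typ_c \<Gamma> C k \<Delta> \<Longrightarrow> le_C k k' \<Longrightarrow> typ_c \<Gamma> C k' \<Delta>"

end

theory Submission
  imports Defs
begin

lemma agree:
 "typ_t \<Gamma> M \<sigma> \<Delta> \<Longrightarrow> (\<And>\<Gamma>' \<Delta>'. \<forall>z\<in>fv_t M. \<Gamma>' z = \<Gamma> z \<Longrightarrow> \<forall>z\<in>bv_t M. \<Gamma> z = None \<longrightarrow> \<Gamma>' z = None
    \<Longrightarrow> \<forall>n\<in>fn_t M. \<Delta>' n = \<Delta> n \<Longrightarrow> \<forall>n\<in>bn_t M. \<Delta> n = None \<longrightarrow> \<Delta>' n = None \<Longrightarrow> typ_t \<Gamma>' M \<sigma> \<Delta>')"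
 "typ_c \<Gamma> C \<kappa> \<Delta> \<Longrightarrow> (\<And>\<Gamma>' \<Delta>'. \<forall>z\<in>fv_c C. \<Gamma>' z = \<Gamma> z \<Longrightarrow> \<forall>z\<in>bv_c C. \<Gamma> z = None \<longrightarrow> \<Gamma>' z = None
    \<Longrightarrow> \<forall>n\<in>fn_c C. \<Delta>' n = \<Delta> n \<Longrightarrow> \<forall>n\<in>bn_c C. \<Delta> n = None \<longrightarrow> \<Delta>' n = None \<Longrightarrow> typ_c \<Gamma>' C \<kappa> \<Delta>')"
proof (induction rule: typ_t_typ_c.inducts)
  case (Ax \<Gamma> x d \<Delta>)
  then show ?case by (auto intro: typ_t_typ_c.Ax)
next
  case (Abs \<Gamma> M k r \<Delta> x)
  have "typ_t (\<Gamma>'(x := \<Gamma> x)) M (Arr k r) \<Delta>'"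
    using Abs.prems by (intro Abs.IH) auto
  then have "typ_t ((\<Gamma>'(x := \<Gamma> x))(x:=None)) (Lam x M) (Arr (Prod (gam (\<Gamma>'(x := \<Gamma> x)) x) k) r) \<Delta>'"
    by (rule typ_t_typ_c.Abs)
  moreover have "(\<Gamma>'(x := \<Gamma> x))(x:=None) = \<Gamma>'" using Abs.prems(2) by auto
  ultimately show ?case by (simp add: gam_def)
next
  case (App \<Gamma> M d k r \<Delta> N)
  have "typ_t \<Gamma>' M (Arr (Prod d k) r) \<Delta>'" using App by auto
  moreover have "typ_t \<Gamma>' N d \<Delta>'" using App by auto
  ultimately show ?case by (rule typ_t_typ_c.App)
next
  case (Cmd \<Gamma> M d \<Delta> a)
  have "typ_t \<Gamma>' M d \<Delta>'" using Cmd by auto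
  then have "typ_c \<Gamma>' (Cmd a M) (Prod d (dlt \<Delta>' a)) \<Delta>'" by (rule typ_t_typ_c.Cmd)
  then show ?case using Cmd.prems(3) by (simp add: dlt_def)
next
  case (Mu \<Gamma> C k' r \<Delta> a)
  have "typ_c \<Gamma>' C (Prod (Arr k' r) k') (\<Delta>'(a := \<Delta> a))"
    using Mu.prems by (intro Mu.IH) auto
  then have "typ_t \<Gamma>' (Mu a C) (Arr (dlt (\<Delta>'(a := \<Delta> a)) a) r) ((\<Delta>'(a := \<Delta> a))(a:=None))"
    by (rule typ_t_typ_c.Mu)
  moreover have "(\<Delta>'(a := \<Delta> a))(a:=None) = \<Delta>'" using Mu.prems(4) by auto
  ultimately show ?case by (simp add: dlt_def)
qed (auto intro: typ_t_typ_c.intros)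

lemma mono:
 "typ_t \<Gamma> M \<sigma> \<Delta> \<Longrightarrow> (\<And>\<Gamma>'. \<forall>z. le_D (gam \<Gamma>' z) (gam \<Gamma> z) \<Longrightarrow> \<forall>z. \<Gamma> z = None \<longrightarrow> \<Gamma>' z = None \<Longrightarrow> typ_t \<Gamma>' M \<sigma> \<Delta>)"
 "typ_c \<Gamma> C \<kappa> \<Delta> \<Longrightarrow> (\<And>\<Gamma>'. \<forall>z. le_D (gam \<Gamma>' z) (gam \<Gamma> z) \<Longrightarrow> \<forall>z. \<Gamma> z = None \<longrightarrow> \<Gamma>' z = None \<Longrightarrow> typ_c \<Gamma>' C \<kappa> \<Delta>)"
proof (induction rule: typ_t_typ_c.inducts)
  case (Ax \<Gamma> x d \<Delta>)
  show ?case
  proof (cases "\<Gamma>' x")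
    case None
    then have "le_D OmD d" using Ax by (metis gam_def option.simps(4,5))
    then show ?thesis by (meson typ_t_typ_c.Om_t typ_t_typ_c.Le_t)
  next
    case (Some d')
    then have "le_D d' d" using Ax by (metis gam_def option.simps(5))
    then show ?thesis using Some by (meson typ_t_typ_c.Ax typ_t_typ_c.Le_t)
  qed
next
  case (Abs \<Gamma> M k r \<Delta> x)
  have "le_D (gam (\<Gamma>'(x := \<Gamma> x)) z) (gam \<Gamma> z)" for z
  proof (cases "z = x")
    case True then show ?thesis by (simp add: gam_def le_D_le_C.D_refl)
  next
    case False then show ?thesis using Abs.prems(1) spec[OF Abs.prems(1), of z] by (simp add: gam_def)
  qed
  moreover have "\<forall>z. \<Gamma> z = None \<longrightarrow> (\<Gamma>'(x := \<Gamma> x)) z = None" using Abs.prems(2) by auto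
  ultimately have "typ_t (\<Gamma>'(x := \<Gamma> x)) M (Arr k r) \<Delta>"
    by (intro Abs.IH) blast+
  then have "typ_t ((\<Gamma>'(x := \<Gamma> x))(x:=None)) (Lam x M) (Arr (Prod (gam (\<Gamma>'(x := \<Gamma> x)) x) k) r) \<Delta>"
    by (rule typ_t_typ_c.Abs)
  moreover have "(\<Gamma>'(x := \<Gamma> x))(x:=None) = \<Gamma>'" using Abs.prems(2) by auto
  ultimately show ?case by (simp add: gam_def)
qed (meson typ_t_typ_c.intros)+

lemma ren_inv:
  "Var x = ren_t M a b \<Longrightarrow> M = Var x"
  "Lam x N = ren_t M a b \<Longrightarrow> \<exists>M'. M = Lam x M' \<and> N = ren_t M' a b"
  "App N1 N2 = ren_t M a b \<Longrightarrow> \<exists>M1 M2. M = App M1 M2 \<and> N1 = ren_t M1 a b \<and> N2 = ren_t M2 a b"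
  "Mu g C' = ren_t M a b \<Longrightarrow> b \<notin> bn_t M \<Longrightarrow> \<exists>C. M = Mu g C \<and> C' = ren_c C a b"
  "Cmd g N = ren_c C a b \<Longrightarrow> \<exists>g0 M. C = Cmd g0 M \<and> g = (if g0 = b then a else g0) \<and> N = ren_t M a b"
  by (cases M; auto split: if_splits; fail)+ (cases C; auto)

lemma ren_fwd:
 "typ_t \<Gamma> N \<sigma> \<Delta> \<Longrightarrow> (\<And>M. N = ren_t M a b \<Longrightarrow> a \<notin> bn_t M \<Longrightarrow> b \<notin> bn_t M \<Longrightarrow> typ_t \<Gamma> M \<sigma> (\<Delta>(b \<mapsto> dlt \<Delta> a)))"
 "typ_c \<Gamma> C' \<kappa> \<Delta> \<Longrightarrow> (\<And>C. C' = ren_c C a b \<Longrightarrow> a \<notin> bn_c C \<Longrightarrow> b \<notin> bn_c C \<Longrightarrow> typ_c \<Gamma> C \<kappa> (\<Delta>(b \<mapsto> dlt \<Delta> a)))"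
proof (induction rule: typ_t_typ_c.inducts)
  case (Ax \<Gamma> x d \<Delta>)
  then show ?case using ren_inv(1) by (metis typ_t_typ_c.Ax)
next
  case (Abs \<Gamma> M k r \<Delta> x M0)
  then obtain M' where "M0 = Lam x M'" "M = ren_t M' a b" using ren_inv(2) by metis
  with Abs.prems have "typ_t \<Gamma> M' (Arr k r) (\<Delta>(b \<mapsto> dlt \<Delta> a))"
    using Abs.IH[of M'] by (simp add: fun_upd_def)
  from typ_t_typ_c.Abs[OF this, of x] show ?case using \<open>M0 = Lam x M'\<close> by (simp add: fun_upd_def)
next
  case (App \<Gamma> M d k r \<Delta> N M0)
  then obtain M1 M2 where "M0 = App M1 M2" "M = ren_t M1 a b" "N = ren_t M2 a b" using ren_inv(3) by metis
  with App show ?case by (auto intro: typ_t_typ_c.App)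
next
  case (Cmd \<Gamma> M d \<Delta> g C)
  then obtain g0 M0 where e: "C = Cmd g0 M0" "g = (if g0 = b then a else g0)" "M = ren_t M0 a b"
    using ren_inv(5) by metis
  with Cmd have "typ_t \<Gamma> M0 d (\<Delta>(b \<mapsto> dlt \<Delta> a))" by (simp add: fun_upd_def)
  then have "typ_c \<Gamma> (Cmd g0 M0) (Prod d (dlt (\<Delta>(b \<mapsto> dlt \<Delta> a)) g0)) (\<Delta>(b \<mapsto> dlt \<Delta> a))"
    by (rule typ_t_typ_c.Cmd)
  moreover have "dlt (\<Delta>(b \<mapsto> dlt \<Delta> a)) g0 = dlt \<Delta> g" using e by (auto simp: dlt_def)
  ultimately show ?case using e by (simp add: fun_upd_def)
next
  case (Mu \<Gamma> C k' r \<Delta> g M0)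
  then obtain C0 where e: "M0 = Mu g C0" "C = ren_c C0 a b" using ren_inv(4) by metis
  with Mu.prems have gab: "g \<noteq> a" "g \<noteq> b" by auto
  with Mu e have "typ_c \<Gamma> C0 (Prod (Arr k' r) k') (\<Delta>(b \<mapsto> dlt \<Delta> a))" by (simp add: fun_upd_def)
  then have "typ_t \<Gamma> (Mu g C0) (Arr (dlt (\<Delta>(b \<mapsto> dlt \<Delta> a)) g) r) ((\<Delta>(b \<mapsto> dlt \<Delta> a))(g := None))"
    by (rule typ_t_typ_c.Mu)
  moreover have "(\<Delta>(b \<mapsto> dlt \<Delta> a))(g := None) = (\<Delta>(g := None))(b \<mapsto> dlt (\<Delta>(g := None)) a)"
    using gab by (auto simp: dlt_def)
  moreover have "dlt (\<Delta>(b \<mapsto> dlt \<Delta> a)) g = dlt \<Delta> g" using gab by (auto simp: dlt_def)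
  ultimately show ?case using e by (simp add: fun_upd_def)
next
  case (And_t \<Gamma> M d1 \<Delta> d2) then show ?case by (simp add: typ_t_typ_c.And_t)
next
  case (Om_t \<Gamma> M \<Delta>) then show ?case by (simp add: typ_t_typ_c.Om_t)
next
  case (Le_t \<Gamma> M d \<Delta> d') then show ?case by (blast intro: typ_t_typ_c.Le_t)
next
  case (And_c \<Gamma> M d1 \<Delta> d2) then show ?case by (simp add: typ_t_typ_c.And_c)
next
  case (Om_c \<Gamma> M \<Delta>) then show ?case by (simp add: typ_t_typ_c.Om_c)
next
  case (Le_c \<Gamma> M d \<Delta> d') then show ?case by (blast intro: typ_t_typ_c.Le_c)
qed

lemma ren_bwd:
 "typ_t \<Gamma> M \<sigma> \<Delta>0 \<Longrightarrow> (\<And>\<Delta>. a \<notin> bn_t M \<Longrightarrow> b \<notin> bn_t M \<Longrightarrow> \<Delta> b = None \<Longrightarrow> \<forall>n. n \<noteq> b \<longrightarrow> \<Delta> n = \<Delta>0 n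
     \<Longrightarrow> le_C (dlt \<Delta> a) (dlt \<Delta>0 b) \<Longrightarrow> typ_t \<Gamma> (ren_t M a b) \<sigma> \<Delta>)"
 "typ_c \<Gamma> C \<kappa> \<Delta>0 \<Longrightarrow> (\<And>\<Delta>. a \<notin> bn_c C \<Longrightarrow> b \<notin> bn_c C \<Longrightarrow> \<Delta> b = None \<Longrightarrow> \<forall>n. n \<noteq> b \<longrightarrow> \<Delta> n = \<Delta>0 n
     \<Longrightarrow> le_C (dlt \<Delta> a) (dlt \<Delta>0 b) \<Longrightarrow> typ_c \<Gamma> (ren_c C a b) \<kappa> \<Delta>)"
proof (induction rule: typ_t_typ_c.inducts)
  case (Ax \<Gamma> x d \<Delta>)
  then show ?case by (auto intro: typ_t_typ_c.Ax)
next
  case (Abs \<Gamma> M k r \<Delta>0 x)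
  have "typ_t \<Gamma> (ren_t M a b) (Arr k r) \<Delta>" using Abs by auto
  from typ_t_typ_c.Abs[OF this, of x] show ?case by (simp add: fun_upd_def)
next
  case (App \<Gamma> M d k r \<Delta>0 N)
  have "typ_t \<Gamma> (ren_t M a b) (Arr (Prod d k) r) \<Delta>" using App by auto
  moreover have "typ_t \<Gamma> (ren_t N a b) d \<Delta>" using App by auto
  ultimately show ?case by (auto intro: typ_t_typ_c.App)
next
  case (Cmd \<Gamma> M d \<Delta>0 g)
  have "typ_t \<Gamma> (ren_t M a b) d \<Delta>" using Cmd by auto
  then have t: "typ_c \<Gamma> (Cmd (if g = b then a else g) (ren_t M a b)) (Prod d (dlt \<Delta> (if g = b then a else g))) \<Delta>"
    by (rule typ_t_typ_c.Cmd)
  show ?case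
  proof (cases "g = b")
    case True
    have "le_C (Prod d (dlt \<Delta> a)) (Prod d (dlt \<Delta>0 g))"
      using Cmd.prems(5) True by (simp add: le_D_le_C.C_prod_mono le_D_le_C.D_refl)
    with t True show ?thesis by (auto intro: typ_t_typ_c.Le_c)
  next
    case False
    then have "dlt \<Delta> g = dlt \<Delta>0 g" using Cmd.prems(4) by (simp add: dlt_def)
    with t False show ?thesis by simp
  qed
next
  case (Mu \<Gamma> C k' r \<Delta>1 g)
  have gab: "g \<noteq> a" "g \<noteq> b" using Mu.prems by auto
  have "typ_c \<Gamma> (ren_c C a b) (Prod (Arr k' r) k') (\<Delta>(g := \<Delta>1 g))"
    using Mu.prems gab by (intro Mu.IH) (auto simp: dlt_def)
  then have "typ_t \<Gamma> (Mu g (ren_c C a b)) (Arr (dlt (\<Delta>(g := \<Delta>1 g)) g) r) ((\<Delta>(g := \<Delta>1 g))(g := None))"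
    by (rule typ_t_typ_c.Mu)
  moreover have "(\<Delta>(g := \<Delta>1 g))(g := None) = \<Delta>" using Mu.prems(4) gab by auto
  moreover have "dlt (\<Delta>(g := \<Delta>1 g)) g = dlt \<Delta>1 g" by (simp add: dlt_def)
  ultimately show ?case using gab by simp
next
  case (And_t \<Gamma> M d1 \<Delta> d2) then show ?case by (simp add: typ_t_typ_c.And_t)
next
  case (Om_t \<Gamma> M \<Delta>) then show ?case by (simp add: typ_t_typ_c.Om_t)
next
  case (Le_t \<Gamma> M d \<Delta> d') then show ?case by (blast intro: typ_t_typ_c.Le_t)
next
  case (And_c \<Gamma> M d1 \<Delta> d2) then show ?case by (simp add: typ_t_typ_c.And_c)
next
  case (Om_c \<Gamma> M \<Delta>) then show ?case by (simp add: typ_t_typ_c.Om_c)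
next
  case (Le_c \<Gamma> M d \<Delta> d') then show ?case by (blast intro: typ_t_typ_c.Le_c)
qed

lemma subst_bwd:
 "typ_t \<Gamma>0 M \<sigma> \<Delta> \<Longrightarrow> (\<And>\<Gamma>. \<Gamma>0 = \<Gamma>(x \<mapsto> \<delta>') \<Longrightarrow> typ_t \<Gamma> L \<delta>' \<Delta> \<Longrightarrow> bv_t M \<inter> (fv_t L \<union> bv_t L) = {}
    \<Longrightarrow> bn_t M \<inter> (fn_t L \<union> bn_t L) = {} \<Longrightarrow> typ_t \<Gamma> (subst_t M L x) \<sigma> \<Delta>)"
 "typ_c \<Gamma>0 C \<kappa> \<Delta> \<Longrightarrow> (\<And>\<Gamma>. \<Gamma>0 = \<Gamma>(x \<mapsto> \<delta>') \<Longrightarrow> typ_t \<Gamma> L \<delta>' \<Delta> \<Longrightarrow> bv_c C \<inter> (fv_t L \<union> bv_t L) = {}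
    \<Longrightarrow> bn_c C \<inter> (fn_t L \<union> bn_t L) = {} \<Longrightarrow> typ_c \<Gamma> (subst_c C L x) \<kappa> \<Delta>)"
proof (induction rule: typ_t_typ_c.inducts)
  case (Ax \<Gamma>0 y d \<Delta>)
  show ?case
  proof (cases "y = x")
    case True then show ?thesis using Ax by simp
  next
    case False then show ?thesis using Ax by (simp add: typ_t_typ_c.Ax)
  qed
next
  case (Abs \<Gamma>1 M k r \<Delta> y)
  have yx: "y \<noteq> x" using Abs.prems(1) by (metis fun_upd_same fun_upd_apply option.distinct(1))
  have e1: "\<Gamma>1 = (\<Gamma>(y := \<Gamma>1 y))(x \<mapsto> \<delta>')"
  proof
    fix z show "\<Gamma>1 z = ((\<Gamma>(y := \<Gamma>1 y))(x \<mapsto> \<delta>')) z"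
      using fun_cong[OF Abs.prems(1), of z] yx by (cases "z = y") auto
  qed
  have "typ_t (\<Gamma>(y := \<Gamma>1 y)) L \<delta>' \<Delta>"
    using Abs.prems(3) by (intro agree(1)[OF Abs.prems(2)]) auto
  then have "typ_t (\<Gamma>(y := \<Gamma>1 y)) (subst_t M L x) (Arr k r) \<Delta>"
    using Abs.IH[OF e1] Abs.prems(3,4) by (simp add: fun_upd_def)
  from typ_t_typ_c.Abs[OF this, of y]
  have "typ_t ((\<Gamma>(y := \<Gamma>1 y))(y := None)) (Lam y (subst_t M L x)) (Arr (Prod (gam \<Gamma>1 y) k) r) \<Delta>"
    by (simp add: gam_def)
  moreover have "(\<Gamma>(y := \<Gamma>1 y))(y := None) = \<Gamma>"
    using fun_cong[OF Abs.prems(1), of y] yx by auto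
  ultimately show ?case using yx by simp
next
  case (App \<Gamma>0 M d k r \<Delta> N)
  have "typ_t \<Gamma> (subst_t M L x) (Arr (Prod d k) r) \<Delta>" using App by auto
  moreover have "typ_t \<Gamma> (subst_t N L x) d \<Delta>" using App by auto
  ultimately show ?case by (auto intro: typ_t_typ_c.App)
next
  case (Cmd \<Gamma>0 M d \<Delta> g)
  have "typ_t \<Gamma> (subst_t M L x) d \<Delta>" using Cmd by auto
  then show ?case by (auto intro: typ_t_typ_c.Cmd)
next
  case (Mu \<Gamma>0 C k' r \<Delta>1 g)
  have "typ_t \<Gamma> L \<delta>' \<Delta>1"
    using Mu.prems(4) by (intro agree(1)[OF Mu.prems(2)]) auto
  then have "typ_c \<Gamma> (subst_c C L x) (Prod (Arr k' r) k') \<Delta>1"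
    using Mu.prems by (intro Mu.IH) auto
  from typ_t_typ_c.Mu[OF this, of g] show ?case by (simp add: fun_upd_def)
next
  case (And_t \<Gamma> M d1 \<Delta> d2) then show ?case by (simp add: typ_t_typ_c.And_t)
next
  case (Om_t \<Gamma> M \<Delta>) then show ?case by (simp add: typ_t_typ_c.Om_t)
next
  case (Le_t \<Gamma> M d \<Delta> d') then show ?case by (blast intro: typ_t_typ_c.Le_t)
next
  case (And_c \<Gamma> M d1 \<Delta> d2) then show ?case by (simp add: typ_t_typ_c.And_c)
next
  case (Om_c \<Gamma> M \<Delta>) then show ?case by (simp add: typ_t_typ_c.Om_c)
next
  case (Le_c \<Gamma> M d \<Delta> d') then show ?case by (blast intro: typ_t_typ_c.Le_c)
qed

lemma sub_inv:
  "Var y = subst_t M L x \<Longrightarrow> M \<noteq> Var x \<Longrightarrow> M = Var y \<and> y \<noteq> x"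
  "Lam y N = subst_t M L x \<Longrightarrow> M \<noteq> Var x \<Longrightarrow> x \<notin> bv_t M \<Longrightarrow> \<exists>M'. M = Lam y M' \<and> N = subst_t M' L x \<and> y \<noteq> x"
  "App N1 N2 = subst_t M L x \<Longrightarrow> M \<noteq> Var x \<Longrightarrow> \<exists>M1 M2. M = App M1 M2 \<and> N1 = subst_t M1 L x \<and> N2 = subst_t M2 L x"
  "Mu g C' = subst_t M L x \<Longrightarrow> M \<noteq> Var x \<Longrightarrow> \<exists>C. M = Mu g C \<and> C' = subst_c C L x"
  "Cmd g N = subst_c C L x \<Longrightarrow> \<exists>M. C = Cmd g M \<and> N = subst_t M L x"
  by (cases M; auto split: if_splits; fail)+ (cases C; auto)

lemma varx: "typ_t \<Gamma> L \<sigma> \<Delta> \<Longrightarrow> \<exists>\<delta>'. typ_t (\<Gamma>(x \<mapsto> \<delta>')) (Var x) \<sigma> \<Delta> \<and> typ_t \<Gamma> L \<delta>' \<Delta>"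
  by (rule exI[of _ \<sigma>]) (simp add: typ_t_typ_c.Ax)

lemma mono_x:
  "typ_t (\<Gamma>(x \<mapsto> \<delta>1)) M \<sigma> \<Delta> \<Longrightarrow> le_D \<delta>2 \<delta>1 \<Longrightarrow> typ_t (\<Gamma>(x \<mapsto> \<delta>2)) M \<sigma> \<Delta>"
  "typ_c (\<Gamma>(x \<mapsto> \<delta>1)) C \<kappa> \<Delta> \<Longrightarrow> le_D \<delta>2 \<delta>1 \<Longrightarrow> typ_c (\<Gamma>(x \<mapsto> \<delta>2)) C \<kappa> \<Delta>"
   by (erule mono; auto simp: gam_def le_D_le_C.D_refl)+

lemma subst_fwd:
 "typ_t \<Gamma> N \<sigma> \<Delta> \<Longrightarrow> (\<And>M. N = subst_t M L x \<Longrightarrow> x \<notin> bv_t M \<Longrightarrow> bv_t M \<inter> fv_t L = {} \<Longrightarrow> bn_t M \<inter> fn_t L = {}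
     \<Longrightarrow> \<exists>\<delta>'. typ_t (\<Gamma>(x \<mapsto> \<delta>')) M \<sigma> \<Delta> \<and> typ_t \<Gamma> L \<delta>' \<Delta>)"
 "typ_c \<Gamma> C' \<kappa> \<Delta> \<Longrightarrow> (\<And>C. C' = subst_c C L x \<Longrightarrow> x \<notin> bv_c C \<Longrightarrow> bv_c C \<inter> fv_t L = {} \<Longrightarrow> bn_c C \<inter> fn_t L = {}
     \<Longrightarrow> \<exists>\<delta>'. typ_c (\<Gamma>(x \<mapsto> \<delta>')) C \<kappa> \<Delta> \<and> typ_t \<Gamma> L \<delta>' \<Delta>)"
proof (induction rule: typ_t_typ_c.inducts)
  case (Ax \<Gamma> y d \<Delta> M)
  have T: "typ_t \<Gamma> (Var y) d \<Delta>" using Ax.hyps by (rule typ_t_typ_c.Ax)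
  show ?case
  proof (cases "M = Var x")
    case True then show ?thesis using varx[OF T, of x] Ax.prems(1) by (simp add: fun_upd_def)
  next
    case False
    then have "M = Var y" "y \<noteq> x" using sub_inv(1)[OF Ax.prems(1)] by auto
    then have "typ_t (\<Gamma>(x \<mapsto> OmD)) M d \<Delta>" using Ax.hyps by (simp add: typ_t_typ_c.Ax)
    then show ?thesis by (blast intro: typ_t_typ_c.Om_t)
  qed
next
  case (Abs \<Gamma>1 N1 k r \<Delta> y M)
  have T: "typ_t (\<Gamma>1(y := None)) (Lam y N1) (Arr (Prod (gam \<Gamma>1 y) k) r) \<Delta>"
    using Abs.hyps(1) by (rule typ_t_typ_c.Abs)
  show ?case
  proof (cases "M = Var x")
    case True then show ?thesis using varx[OF T, of x] Abs.prems(1) by (simp add: fun_upd_def)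
  next
    case False
    then obtain M' where e: "M = Lam y M'" "N1 = subst_t M' L x" "y \<noteq> x"
      using sub_inv(2)[OF Abs.prems(1)] Abs.prems(2) by blast
    then obtain \<delta>' where d1: "typ_t (\<Gamma>1(x \<mapsto> \<delta>')) M' (Arr k r) \<Delta>" and d2: "typ_t \<Gamma>1 L \<delta>' \<Delta>"
      using Abs.IH[OF e(2)] Abs.prems by (auto simp: fun_upd_def)
    from typ_t_typ_c.Abs[OF d1, of y]
    have "typ_t ((\<Gamma>1(y := None))(x \<mapsto> \<delta>')) (Lam y M') (Arr (Prod (gam \<Gamma>1 y) k) r) \<Delta>"
      using e(3) by (simp add: gam_def fun_upd_twist)
    moreover have "typ_t (\<Gamma>1(y := None)) L \<delta>' \<Delta>"
      using Abs.prems(3) e(1) by (intro agree(1)[OF d2]) auto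
    ultimately show ?thesis using e(1) by blast
  qed
next
  case (App \<Gamma> N1 d k r \<Delta> N2 M)
  have T: "typ_t \<Gamma> (App N1 N2) (Arr k r) \<Delta>" using App.hyps(1,2) by (rule typ_t_typ_c.App)
  show ?case
  proof (cases "M = Var x")
    case True then show ?thesis using varx[OF T, of x] App.prems(1) by (simp add: fun_upd_def)
  next
    case False
    then obtain M1 M2 where e: "M = App M1 M2" "N1 = subst_t M1 L x" "N2 = subst_t M2 L x"
      using sub_inv(3)[OF App.prems(1)] by blast
    obtain \<delta>1 where a1: "typ_t (\<Gamma>(x \<mapsto> \<delta>1)) M1 (Arr (Prod d k) r) \<Delta>" and a2: "typ_t \<Gamma> L \<delta>1 \<Delta>"
      using App.IH(1)[OF e(2)] App.prems e(1) by (auto simp: fun_upd_def)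
    obtain \<delta>2 where b1: "typ_t (\<Gamma>(x \<mapsto> \<delta>2)) M2 d \<Delta>" and b2: "typ_t \<Gamma> L \<delta>2 \<Delta>"
      using App.IH(2)[OF e(3)] App.prems e(1) by (auto simp: fun_upd_def)
    have "typ_t (\<Gamma>(x \<mapsto> AndD \<delta>1 \<delta>2)) M1 (Arr (Prod d k) r) \<Delta>"
      using mono_x(1)[OF a1] by (simp add: le_D_le_C.D_andL)
    moreover have "typ_t (\<Gamma>(x \<mapsto> AndD \<delta>1 \<delta>2)) M2 d \<Delta>"
      using mono_x(1)[OF b1] by (simp add: le_D_le_C.D_andR)
    ultimately have "typ_t (\<Gamma>(x \<mapsto> AndD \<delta>1 \<delta>2)) M (Arr k r) \<Delta>"
      using e(1) by (simp add: typ_t_typ_c.App)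
    moreover have "typ_t \<Gamma> L (AndD \<delta>1 \<delta>2) \<Delta>" using a2 b2 by (rule typ_t_typ_c.And_t)
    ultimately show ?thesis by blast
  qed
next
  case (Cmd \<Gamma> N1 d \<Delta> g C)
  then obtain M where e: "C = Cmd g M" "N1 = subst_t M L x" using sub_inv(5) by blast
  then obtain \<delta>' where "typ_t (\<Gamma>(x \<mapsto> \<delta>')) M d \<Delta>" "typ_t \<Gamma> L \<delta>' \<Delta>"
    using Cmd.IH[OF e(2)] Cmd.prems by (auto simp: fun_upd_def)
  then show ?case using e(1) by (blast intro: typ_t_typ_c.Cmd)
next
  case (Mu \<Gamma> C1 k' r \<Delta>1 g M)
  have T: "typ_t \<Gamma> (Mu g C1) (Arr (dlt \<Delta>1 g) r) (\<Delta>1(g := None))" using Mu.hyps(1) by (rule typ_t_typ_c.Mu)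
  show ?case
  proof (cases "M = Var x")
    case True then show ?thesis using varx[OF T, of x] Mu.prems(1) by (simp add: fun_upd_def)
  next
    case False
    then obtain C where e: "M = Mu g C" "C1 = subst_c C L x"
      using sub_inv(4)[OF Mu.prems(1)] by blast
    obtain \<delta>' where d1: "typ_c (\<Gamma>(x \<mapsto> \<delta>')) C (Prod (Arr k' r) k') \<Delta>1" and d2: "typ_t \<Gamma> L \<delta>' \<Delta>1"
      using Mu.IH[OF e(2)] Mu.prems e(1) by (auto simp: fun_upd_def)
    from typ_t_typ_c.Mu[OF d1, of g]
    have "typ_t (\<Gamma>(x \<mapsto> \<delta>')) M (Arr (dlt \<Delta>1 g) r) (\<Delta>1(g := None))" using e(1) by simp
    moreover have "typ_t \<Gamma> L \<delta>' (\<Delta>1(g := None))"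
      using Mu.prems(4) e(1) by (intro agree(1)[OF d2]) auto
    ultimately show ?thesis by (simp add: fun_upd_def) blast
  qed
next
  case (And_t \<Gamma> N d1 \<Delta> d2 M)
  have T: "typ_t \<Gamma> N (AndD d1 d2) \<Delta>" using And_t.hyps(1,2) by (rule typ_t_typ_c.And_t)
  show ?case
  proof (cases "M = Var x")
    case True then show ?thesis using varx[OF T, of x] And_t.prems(1) by (simp add: fun_upd_def)
  next
    case False
    obtain \<delta>1 where a1: "typ_t (\<Gamma>(x \<mapsto> \<delta>1)) M d1 \<Delta>" and a2: "typ_t \<Gamma> L \<delta>1 \<Delta>"
      using And_t.IH(1)[of M] And_t.prems by (auto simp: fun_upd_def)
    obtain \<delta>2 where b1: "typ_t (\<Gamma>(x \<mapsto> \<delta>2)) M d2 \<Delta>" and b2: "typ_t \<Gamma> L \<delta>2 \<Delta>"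
      using And_t.IH(2)[of M] And_t.prems by (auto simp: fun_upd_def)
    have "typ_t (\<Gamma>(x \<mapsto> AndD \<delta>1 \<delta>2)) M d1 \<Delta>"
      using mono_x(1)[OF a1] by (simp add: le_D_le_C.D_andL)
    moreover have "typ_t (\<Gamma>(x \<mapsto> AndD \<delta>1 \<delta>2)) M d2 \<Delta>"
      using mono_x(1)[OF b1] by (simp add: le_D_le_C.D_andR)
    ultimately have "typ_t (\<Gamma>(x \<mapsto> AndD \<delta>1 \<delta>2)) M (AndD d1 d2) \<Delta>"
      by (rule typ_t_typ_c.And_t)
    moreover have "typ_t \<Gamma> L (AndD \<delta>1 \<delta>2) \<Delta>" using a2 b2 by (rule typ_t_typ_c.And_t)
    ultimately show ?thesis by blast
  qed
next
  case (Om_t \<Gamma> N \<Delta> M)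
  then show ?case by (blast intro: typ_t_typ_c.Om_t)
next
  case (Le_t \<Gamma> N d \<Delta> d' M)
  then obtain \<delta>' where "typ_t (\<Gamma>(x \<mapsto> \<delta>')) M d \<Delta>" "typ_t \<Gamma> L \<delta>' \<Delta>" by blast
  then show ?case using Le_t.hyps(2) by (blast intro: typ_t_typ_c.Le_t)
next
  case (And_c \<Gamma> C1 k1 \<Delta> k2 C)
  obtain \<delta>1 where a1: "typ_c (\<Gamma>(x \<mapsto> \<delta>1)) C k1 \<Delta>" and a2: "typ_t \<Gamma> L \<delta>1 \<Delta>"
    using And_c.IH(1)[of C] And_c.prems by (auto simp: fun_upd_def)
  obtain \<delta>2 where b1: "typ_c (\<Gamma>(x \<mapsto> \<delta>2)) C k2 \<Delta>" and b2: "typ_t \<Gamma> L \<delta>2 \<Delta>"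
    using And_c.IH(2)[of C] And_c.prems by (auto simp: fun_upd_def)
  have "typ_c (\<Gamma>(x \<mapsto> AndD \<delta>1 \<delta>2)) C k1 \<Delta>"
    using mono_x(2)[OF a1] by (simp add: le_D_le_C.D_andL)
  moreover have "typ_c (\<Gamma>(x \<mapsto> AndD \<delta>1 \<delta>2)) C k2 \<Delta>"
    using mono_x(2)[OF b1] by (simp add: le_D_le_C.D_andR)
  ultimately have "typ_c (\<Gamma>(x \<mapsto> AndD \<delta>1 \<delta>2)) C (AndC k1 k2) \<Delta>"
    by (rule typ_t_typ_c.And_c)
  moreover have "typ_t \<Gamma> L (AndD \<delta>1 \<delta>2) \<Delta>" using a2 b2 by (rule typ_t_typ_c.And_t)
  ultimately show ?case by blast
next
  case (Om_c \<Gamma> C1 \<Delta> C)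
  then show ?case by (blast intro: typ_t_typ_c.Om_c typ_t_typ_c.Om_t)
next
  case (Le_c \<Gamma> C1 k \<Delta> k' C)
  then obtain \<delta>' where "typ_c (\<Gamma>(x \<mapsto> \<delta>')) C k \<Delta>" "typ_t \<Gamma> L \<delta>' \<Delta>" by blast
  then show ?case using Le_c.hyps(2) by (blast intro: typ_t_typ_c.Le_c)
qed

theorem lemma5p2:
  assumes "omega_algebraic TYPE('r::complete_lattice)"
  shows
  "(\<forall>(\<Gamma>::'r basis) (\<Delta>::'r ctxt) a b M \<sigma>.
      finite (dom \<Gamma>) \<and> finite (dom \<Delta>) \<and> b \<notin> dom \<Delta> \<and>
      bv_t M \<inter> dom \<Gamma> = {} \<and> bn_t M \<inter> (dom \<Delta> \<union> {a, b}) = {} \<longrightarrow>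
      (typ_t \<Gamma> (ren_t M a b) \<sigma> \<Delta> \<longleftrightarrow>
         (\<exists>\<kappa>. typ_t \<Gamma> M \<sigma> (\<Delta>(b \<mapsto> \<kappa>)) \<and> le_C (dlt \<Delta> a) \<kappa>)))
 \<and> (\<forall>(\<Gamma>::'r basis) (\<Delta>::'r ctxt) a b C \<sigma>.
      finite (dom \<Gamma>) \<and> finite (dom \<Delta>) \<and> b \<notin> dom \<Delta> \<and>
      bv_c C \<inter> dom \<Gamma> = {} \<and> bn_c C \<inter> (dom \<Delta> \<union> {a, b}) = {} \<longrightarrow>
      (typ_c \<Gamma> (ren_c C a b) \<sigma> \<Delta> \<longleftrightarrow>
         (\<exists>\<kappa>. typ_c \<Gamma> C \<sigma> (\<Delta>(b \<mapsto> \<kappa>)) \<and> le_C (dlt \<Delta> a) \<kappa>)))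
 \<and> (\<forall>(\<Gamma>::'r basis) (\<Delta>::'r ctxt) x L M \<sigma>.
      finite (dom \<Gamma>) \<and> finite (dom \<Delta>) \<and> x \<notin> dom \<Gamma> \<and>
      bv_t M \<inter> (dom \<Gamma> \<union> {x} \<union> fv_t L \<union> bv_t L) = {} \<and>
      bn_t M \<inter> (dom \<Delta> \<union> fn_t L \<union> bn_t L) = {} \<and>
      bv_t L \<inter> dom \<Gamma> = {} \<and> bn_t L \<inter> dom \<Delta> = {} \<longrightarrow>
      (typ_t \<Gamma> (subst_t M L x) \<sigma> \<Delta> \<longleftrightarrow>
         (\<exists>\<delta>'. typ_t (\<Gamma>(x \<mapsto> \<delta>')) M \<sigma> \<Delta> \<and> typ_t \<Gamma> L \<delta>' \<Delta>)))
 \<and> (\<forall>(\<Gamma>::'r basis) (\<Delta>::'r ctxt) x L C \<sigma>.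
      finite (dom \<Gamma>) \<and> finite (dom \<Delta>) \<and> x \<notin> dom \<Gamma> \<and>
      bv_c C \<inter> (dom \<Gamma> \<union> {x} \<union> fv_t L \<union> bv_t L) = {} \<and>
      bn_c C \<inter> (dom \<Delta> \<union> fn_t L \<union> bn_t L) = {} \<and>
      bv_t L \<inter> dom \<Gamma> = {} \<and> bn_t L \<inter> dom \<Delta> = {} \<longrightarrow>
      (typ_c \<Gamma> (subst_c C L x) \<sigma> \<Delta> \<longleftrightarrow>
         (\<exists>\<delta>'. typ_c (\<Gamma>(x \<mapsto> \<delta>')) C \<sigma> \<Delta> \<and> typ_t \<Gamma> L \<delta>' \<Delta>)))"
proof (intro conjI allI impI)
  fix \<Gamma> :: "'r basis" and \<Delta> :: "'r ctxt" and a b M \<sigma>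
  assume h: "finite (dom \<Gamma>) \<and> finite (dom \<Delta>) \<and> b \<notin> dom \<Delta> \<and>
      bv_t M \<inter> dom \<Gamma> = {} \<and> bn_t M \<inter> (dom \<Delta> \<union> {a, b}) = {}"
  show "typ_t \<Gamma> (ren_t M a b) \<sigma> \<Delta> \<longleftrightarrow> (\<exists>\<kappa>. typ_t \<Gamma> M \<sigma> (\<Delta>(b \<mapsto> \<kappa>)) \<and> le_C (dlt \<Delta> a) \<kappa>)"
  proof
    assume "typ_t \<Gamma> (ren_t M a b) \<sigma> \<Delta>"
    from ren_fwd(1)[OF this refl] h show "\<exists>\<kappa>. typ_t \<Gamma> M \<sigma> (\<Delta>(b \<mapsto> \<kappa>)) \<and> le_C (dlt \<Delta> a) \<kappa>"
      by (blast intro: le_D_le_C.C_refl)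
  next
    assume "\<exists>\<kappa>. typ_t \<Gamma> M \<sigma> (\<Delta>(b \<mapsto> \<kappa>)) \<and> le_C (dlt \<Delta> a) \<kappa>"
    then obtain \<kappa> where k: "typ_t \<Gamma> M \<sigma> (\<Delta>(b \<mapsto> \<kappa>))" "le_C (dlt \<Delta> a) \<kappa>" by blast
    show "typ_t \<Gamma> (ren_t M a b) \<sigma> \<Delta>"
      using h k(2) by (intro ren_bwd(1)[OF k(1)]) (auto simp: dlt_def)
  qed
next
  fix \<Gamma> :: "'r basis" and \<Delta> :: "'r ctxt" and a b C \<sigma>
  assume h: "finite (dom \<Gamma>) \<and> finite (dom \<Delta>) \<and> b \<notin> dom \<Delta> \<and>
      bv_c C \<inter> dom \<Gamma> = {} \<and> bn_c C \<inter> (dom \<Delta> \<union> {a, b}) = {}"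
  show "typ_c \<Gamma> (ren_c C a b) \<sigma> \<Delta> \<longleftrightarrow> (\<exists>\<kappa>. typ_c \<Gamma> C \<sigma> (\<Delta>(b \<mapsto> \<kappa>)) \<and> le_C (dlt \<Delta> a) \<kappa>)"
  proof
    assume "typ_c \<Gamma> (ren_c C a b) \<sigma> \<Delta>"
    from ren_fwd(2)[OF this refl] h show "\<exists>\<kappa>. typ_c \<Gamma> C \<sigma> (\<Delta>(b \<mapsto> \<kappa>)) \<and> le_C (dlt \<Delta> a) \<kappa>"
      by (blast intro: le_D_le_C.C_refl)
  next
    assume "\<exists>\<kappa>. typ_c \<Gamma> C \<sigma> (\<Delta>(b \<mapsto> \<kappa>)) \<and> le_C (dlt \<Delta> a) \<kappa>"
    then obtain \<kappa> where k: "typ_c \<Gamma> C \<sigma> (\<Delta>(b \<mapsto> \<kappa>))" "le_C (dlt \<Delta> a) \<kappa>" by blast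
    show "typ_c \<Gamma> (ren_c C a b) \<sigma> \<Delta>"
      using h k(2) by (intro ren_bwd(2)[OF k(1)]) (auto simp: dlt_def)
  qed
next
  fix \<Gamma> :: "'r basis" and \<Delta> :: "'r ctxt" and x L M \<sigma>
  assume h: "finite (dom \<Gamma>) \<and> finite (dom \<Delta>) \<and> x \<notin> dom \<Gamma> \<and>
      bv_t M \<inter> (dom \<Gamma> \<union> {x} \<union> fv_t L \<union> bv_t L) = {} \<and>
      bn_t M \<inter> (dom \<Delta> \<union> fn_t L \<union> bn_t L) = {} \<and>
      bv_t L \<inter> dom \<Gamma> = {} \<and> bn_t L \<inter> dom \<Delta> = {}"
  show "typ_t \<Gamma> (subst_t M L x) \<sigma> \<Delta> \<longleftrightarrow> (\<exists>\<delta>'. typ_t (\<Gamma>(x \<mapsto> \<delta>')) M \<sigma> \<Delta> \<and> typ_t \<Gamma> L \<delta>' \<Delta>)"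
  proof
    assume "typ_t \<Gamma> (subst_t M L x) \<sigma> \<Delta>"
    from subst_fwd(1)[OF this refl] h show "\<exists>\<delta>'. typ_t (\<Gamma>(x \<mapsto> \<delta>')) M \<sigma> \<Delta> \<and> typ_t \<Gamma> L \<delta>' \<Delta>"
      by blast
  next
    assume "\<exists>\<delta>'. typ_t (\<Gamma>(x \<mapsto> \<delta>')) M \<sigma> \<Delta> \<and> typ_t \<Gamma> L \<delta>' \<Delta>"
    then obtain \<delta>' where k: "typ_t (\<Gamma>(x \<mapsto> \<delta>')) M \<sigma> \<Delta>" "typ_t \<Gamma> L \<delta>' \<Delta>" by blast
    show "typ_t \<Gamma> (subst_t M L x) \<sigma> \<Delta>"
      using h by (intro subst_bwd(1)[OF k(1) refl k(2)]) auto
  qed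
next
  fix \<Gamma> :: "'r basis" and \<Delta> :: "'r ctxt" and x L C \<sigma>
  assume h: "finite (dom \<Gamma>) \<and> finite (dom \<Delta>) \<and> x \<notin> dom \<Gamma> \<and>
      bv_c C \<inter> (dom \<Gamma> \<union> {x} \<union> fv_t L \<union> bv_t L) = {} \<and>
      bn_c C \<inter> (dom \<Delta> \<union> fn_t L \<union> bn_t L) = {} \<and>
      bv_t L \<inter> dom \<Gamma> = {} \<and> bn_t L \<inter> dom \<Delta> = {}"
  show "typ_c \<Gamma> (subst_c C L x) \<sigma> \<Delta> \<longleftrightarrow> (\<exists>\<delta>'. typ_c (\<Gamma>(x \<mapsto> \<delta>')) C \<sigma> \<Delta> \<and> typ_t \<Gamma> L \<delta>' \<Delta>)"
  proof
    assume "typ_c \<Gamma> (subst_c C L x) \<sigma> \<Delta>"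
    from subst_fwd(2)[OF this refl] h show "\<exists>\<delta>'. typ_c (\<Gamma>(x \<mapsto> \<delta>')) C \<sigma> \<Delta> \<and> typ_t \<Gamma> L \<delta>' \<Delta>"
      by blast
  next
    assume "\<exists>\<delta>'. typ_c (\<Gamma>(x \<mapsto> \<delta>')) C \<sigma> \<Delta> \<and> typ_t \<Gamma> L \<delta>' \<Delta>"
    then obtain \<delta>' where k: "typ_c (\<Gamma>(x \<mapsto> \<delta>')) C \<sigma> \<Delta>" "typ_t \<Gamma> L \<delta>' \<Delta>" by blast
    show "typ_c \<Gamma> (subst_c C L x) \<sigma> \<Delta>"
      using h by (intro subst_bwd(2)[OF k(1) refl k(2)]) auto
  qed
qed

end
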